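(* Let $n\ge 3$ and let $A=(a_{jk})$ be a real $n\times n$ matrix such that: (i) $A$ is symmetric; (ii) all off-diagonal entries of $A$ are non-positive; (iii) $A$ is irreducible, i.e. the simple graph on vertex set $\{1,\dots,n\}$ in which $j\neq k$ are adjacent if and only if $a_{jk}\neq 0$ is connected; (iv) $A\mathbf{1}=\mathbf{0}$, where $\mathbf{1}$ is the all-ones vector. Let $\mathbf{f}=(f_1,\dots,f_n)\in\mathbb{R}^n$ be arbitrary. For each $i\in\{1,\dots,n\}$ let $\mathbf{f}_i:=(f_1,\dots,f_{i-1},\,f_i-\mathbf{f}\cdot\mathbf{1},\,f_{i+1},\dots,f_n)$, and let $\mathbf{x}_i=(x_{i1},\dots,x_{in})$ be the unique solution of the linear system $A\mathbf{x}=\mathbf{f}_i$ satisfying $x_{ii}=0$. Then $$x_{12}+x_{23}+x_{31}=x_{21}+x_{32}+x_{13}.$$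
   Context: Under hypotheses (i)–(iv), $A$ is positive semidefinite of rank $n-1$ with kernel spanned by $\mathbf{1}$; since $\mathbf{f}_i\cdot\mathbf{1}=0$, the system $A\mathbf{x}=\mathbf{f}_i$ has a solution unique up to adding a multiple of $\mathbf{1}$, so the normalization $x_{ii}=0$ determines $\mathbf{x}_i$ uniquely. *)

theory Defs
  imports Complex_Main
begin

text \<open>Real n x n matrices are represented as functions nat => nat => real,
  with indices ranging over {1..n}; vectors as nat => real.\<close>

definition matrix_graph_adj :: "nat \<Rightarrow> (nat \<Rightarrow> nat \<Rightarrow> real) \<Rightarrow> nat \<Rightarrow> nat \<Rightarrow> bool" where
  "matrix_graph_adj n A j k \<longleftrightarrow> j \<in> {1..n} \<and> k \<in> {1..n} \<and> j \<noteq> k \<and> A j k \<noteq> 0"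

definition irreducible_mat :: "nat \<Rightarrow> (nat \<Rightarrow> nat \<Rightarrow> real) \<Rightarrow> bool" where
  "irreducible_mat n A \<longleftrightarrow> (\<forall>j\<in>{1..n}. \<forall>k\<in>{1..n}. (matrix_graph_adj n A)\<^sup>*\<^sup>* j k)"

definition mat_vec :: "nat \<Rightarrow> (nat \<Rightarrow> nat \<Rightarrow> real) \<Rightarrow> (nat \<Rightarrow> real) \<Rightarrow> (nat \<Rightarrow> real)" where
  "mat_vec n A x = (\<lambda>j. \<Sum>k=1..n. A j k * x k)"

definition modified_rhs :: "nat \<Rightarrow> (nat \<Rightarrow> real) \<Rightarrow> nat \<Rightarrow> (nat \<Rightarrow> real)" where
  "modified_rhs n f i = (\<lambda>j. if j = i then f j - (\<Sum>k=1..n. f k) else f j)"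

end

theory Submission
  imports Defs
begin

lemma bilin:
  assumes sym: "\<forall>j\<in>{1..n}. \<forall>k\<in>{1..n}. A j k = A k j"
  shows "(\<Sum>j=1..n. u j * mat_vec n A w j) = (\<Sum>j=1..n. w j * mat_vec n A u j)"
proof -
  have "(\<Sum>j=1..n. u j * mat_vec n A w j) = (\<Sum>j=1..n. \<Sum>k=1..n. u j * A j k * w k)"
    by (simp add: mat_vec_def sum_distrib_left mult.assoc)
  also have "\<dots> = (\<Sum>k=1..n. \<Sum>j=1..n. u j * A j k * w k)" by (rule sum.swap)
  also have "\<dots> = (\<Sum>k=1..n. \<Sum>j=1..n. w k * A k j * u j)"
    by (intro sum.cong refl) (simp add: sym)
  also have "\<dots> = (\<Sum>j=1..n. w j * mat_vec n A u j)"
    by (simp add: mat_vec_def sum_distrib_left mult.assoc)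
  finally show ?thesis .
qed

lemma rhs_dot:
  assumes "i \<in> {1..n}"
  shows "(\<Sum>j=1..n. u j * modified_rhs n f i j) = (\<Sum>j=1..n. u j * f j) - u i * (\<Sum>k=1..n. f k)"
proof -
  have "(\<Sum>j=1..n. u j * modified_rhs n f i j) = (\<Sum>j=1..n. u j * f j - (if j = i then u j * (\<Sum>k=1..n. f k) else 0))"
    by (intro sum.cong refl) (simp add: modified_rhs_def algebra_simps)
  also have "\<dots> = (\<Sum>j=1..n. u j * f j) - u i * (\<Sum>k=1..n. f k)"
    using assms by (simp add: sum_subtractf)
  finally show ?thesis .
qed

lemma sum_nonpos_eq_0_iff:
  fixes g :: "'a \<Rightarrow> real"
  assumes "finite S" "\<forall>x\<in>S. g x \<le> 0"
  shows "(sum g S = 0) = (\<forall>x\<in>S. g x = 0)"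
  using sum_nonneg_eq_0_iff[of S "\<lambda>x. - g x"] assms by (simp add: sum_negf)

lemma kernel:
  assumes sym: "\<forall>j\<in>{1..n}. \<forall>k\<in>{1..n}. A j k = A k j"
    and offdiag: "\<forall>j\<in>{1..n}. \<forall>k\<in>{1..n}. j \<noteq> k \<longrightarrow> A j k \<le> 0"
    and irred: "irreducible_mat n A"
    and rowsum: "\<forall>j\<in>{1..n}. (\<Sum>k=1..n. A j k) = 0"
    and kv: "\<forall>j\<in>{1..n}. mat_vec n A v j = 0"
    and jk: "j \<in> {1..n}" "k \<in> {1..n}"
  shows "v j = v k"
proof -
  have t1: "(\<Sum>j=1..n. \<Sum>k=1..n. A j k * (v j)^2) = 0"
    using rowsum by (simp add: sum_distrib_right[symmetric])
  have t3: "(\<Sum>j=1..n. \<Sum>k=1..n. A j k * (v k)^2) = 0"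
  proof -
    have "(\<Sum>j=1..n. \<Sum>k=1..n. A j k * (v k)^2) = (\<Sum>k=1..n. \<Sum>j=1..n. A k j * (v k)^2)"
      by (subst sum.swap) (intro sum.cong refl, simp add: sym)
    also have "\<dots> = 0" using rowsum by (simp add: sum_distrib_right[symmetric])
    finally show ?thesis .
  qed
  have t2: "(\<Sum>j=1..n. \<Sum>k=1..n. A j k * v j * v k) = 0"
  proof -
    have "(\<Sum>j=1..n. \<Sum>k=1..n. A j k * v j * v k) = (\<Sum>j=1..n. v j * mat_vec n A v j)"
      by (simp add: mat_vec_def sum_distrib_left algebra_simps)
    also have "\<dots> = 0" using kv by simp
    finally show ?thesis .
  qed
  have tot: "(\<Sum>j=1..n. \<Sum>k=1..n. A j k * (v j - v k)^2) = 0"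
  proof -
    have "(\<Sum>j=1..n. \<Sum>k=1..n. A j k * (v j - v k)^2) =
      (\<Sum>j=1..n. \<Sum>k=1..n. A j k * (v j)^2 + A j k * (v k)^2 - 2 * (A j k * v j * v k))"
      by (intro sum.cong refl) (simp add: power2_eq_square algebra_simps)
    also have "\<dots> = (\<Sum>j=1..n. \<Sum>k=1..n. A j k * (v j)^2) + (\<Sum>j=1..n. \<Sum>k=1..n. A j k * (v k)^2)
       - 2 * (\<Sum>j=1..n. \<Sum>k=1..n. A j k * v j * v k)"
      by (simp add: sum.distrib sum_subtractf sum_distrib_left)
    also have "\<dots> = 0" using t1 t2 t3 by simp
    finally show ?thesis .
  qed
  have nonpos: "\<And>j k. j \<in> {1..n} \<Longrightarrow> k \<in> {1..n} \<Longrightarrow> A j k * (v j - v k)^2 \<le> 0"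
  proof -
    fix j k assume a: "j \<in> {1..n}" "k \<in> {1..n}"
    show "A j k * (v j - v k)^2 \<le> 0"
    proof (cases "j = k")
      case True then show ?thesis by simp
    next
      case False
      then have "A j k \<le> 0" using offdiag a by blast
      then show ?thesis by (simp add: mult_nonpos_nonneg)
    qed
  qed
  have inner0: "\<And>j. j \<in> {1..n} \<Longrightarrow> (\<Sum>k=1..n. A j k * (v j - v k)^2) = 0"
  proof -
    have "\<forall>j\<in>{1..n}. (\<Sum>k=1..n. A j k * (v j - v k)^2) = 0"
    proof (rule sum_nonpos_eq_0_iff[THEN iffD1])
      show "finite {1..n}" by simp
      show "\<forall>j\<in>{1..n}. (\<Sum>k=1..n. A j k * (v j - v k)^2) \<le> 0"
        using nonpos by (meson sum_nonpos)
    qed (rule tot)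
    then show "\<And>j. j \<in> {1..n} \<Longrightarrow> (\<Sum>k=1..n. A j k * (v j - v k)^2) = 0" by blast
  qed
  have each0: "\<And>j k. j \<in> {1..n} \<Longrightarrow> k \<in> {1..n} \<Longrightarrow> A j k * (v j - v k)^2 = 0"
  proof -
    fix j k assume a: "j \<in> {1..n}" "k \<in> {1..n}"
    have "\<forall>k\<in>{1..n}. A j k * (v j - v k)^2 = 0"
      using sum_nonpos_eq_0_iff[of "{1..n}" "\<lambda>k. A j k * (v j - v k)^2"] inner0[OF a(1)] nonpos a(1)
      by simp
    then show "A j k * (v j - v k)^2 = 0" using a(2) by blast
  qed
  have adj: "\<And>a b. matrix_graph_adj n A a b \<Longrightarrow> v a = v b"
    using each0 unfolding matrix_graph_adj_def by fastforce
  have "(matrix_graph_adj n A)\<^sup>*\<^sup>* j k" using irred jk unfolding irreducible_mat_def by blast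
  then show ?thesis
    by (induction rule: rtranclp_induct) (auto dest: adj)
qed

theorem mainTheorem1:
  fixes n :: nat and A :: "nat \<Rightarrow> nat \<Rightarrow> real" and f :: "nat \<Rightarrow> real"
    and x :: "nat \<Rightarrow> nat \<Rightarrow> real"
  assumes n3: "n \<ge> 3"
    and sym: "\<forall>j\<in>{1..n}. \<forall>k\<in>{1..n}. A j k = A k j"
    and offdiag: "\<forall>j\<in>{1..n}. \<forall>k\<in>{1..n}. j \<noteq> k \<longrightarrow> A j k \<le> 0"
    and irred: "irreducible_mat n A"
    and rowsum: "\<forall>j\<in>{1..n}. (\<Sum>k=1..n. A j k) = 0"
    and sol: "\<forall>i\<in>{1..n}. \<forall>j\<in>{1..n}. mat_vec n A (x i) j = modified_rhs n f i j"
    and norm: "\<forall>i\<in>{1..n}. x i i = 0"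
  shows "x 1 2 + x 2 3 + x 3 1 = x 2 1 + x 3 2 + x 1 3"
proof -
  define S where "S = (\<Sum>k=1..n. f k)"
  define d where "d i = (\<Sum>j=1..n. x i j * f j)" for i
  have key: "d i - x i j * S = d j - x j i * S" if ij: "i \<in> {1..n}" "j \<in> {1..n}" for i j
  proof -
    have "(\<Sum>k=1..n. x i k * mat_vec n A (x j) k) = (\<Sum>k=1..n. x i k * modified_rhs n f j k)"
      using sol ij by (intro sum.cong refl) simp
    also have "\<dots> = d i - x i j * S" using rhs_dot[OF ij(2)] by (simp add: d_def S_def)
    finally have e1: "(\<Sum>k=1..n. x i k * mat_vec n A (x j) k) = d i - x i j * S" .
    have "(\<Sum>k=1..n. x j k * mat_vec n A (x i) k) = (\<Sum>k=1..n. x j k * modified_rhs n f i k)"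
      using sol ij by (intro sum.cong refl) simp
    also have "\<dots> = d j - x j i * S" using rhs_dot[OF ij(1)] by (simp add: d_def S_def)
    finally have e2: "(\<Sum>k=1..n. x j k * mat_vec n A (x i) k) = d j - x j i * S" .
    show ?thesis using e1 e2 bilin[OF sym, of "x i" "x j"] by simp
  qed
  have m: "1 \<in> {1..n}" "2 \<in> {1..n}" "3 \<in> {1..n}" using n3 by auto
  show ?thesis
  proof (cases "S = 0")
    case False
    have "S * (x 1 2 + x 2 3 + x 3 1) = S * (x 2 1 + x 3 2 + x 1 3)"
      using key[OF m(1) m(2)] key[OF m(2) m(3)] key[OF m(3) m(1)] by (simp add: algebra_simps)
    then show ?thesis using False by simp
  next
    case True
    have rel: "x i j = x 1 j - x 1 i" if ij: "i \<in> {1..n}" "j \<in> {1..n}" for i j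
    proof -
      define v where "v k = x i k - x 1 k" for k
      have kv: "\<forall>k\<in>{1..n}. mat_vec n A v k = 0"
      proof
        fix k assume k: "k \<in> {1..n}"
        have "mat_vec n A v k = mat_vec n A (x i) k - mat_vec n A (x 1) k"
          by (simp add: mat_vec_def v_def algebra_simps sum_subtractf)
        also have "\<dots> = 0" using sol ij k m True by (simp add: modified_rhs_def S_def)
        finally show "mat_vec n A v k = 0" .
      qed
      have "v i = v j" by (rule kernel[OF sym offdiag irred rowsum kv ij])
      then show ?thesis using norm ij by (simp add: v_def)
    qed
    show ?thesis using rel[OF m(1) m(2)] rel[OF m(2) m(3)] rel[OF m(3) m(1)]
      rel[OF m(2) m(1)] rel[OF m(3) m(2)] rel[OF m(1) m(3)] by simp
  qed
qed

end
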